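(* Let $n\ge2$, let $A$ be an $n\times n$ matrix with strictly positive entries, let $p:=\sqrt{R(A)}$, and define for $h\ge0$ \[ \Theta(h)=2\log\!\left(\frac{1+p\,e^{h/2}}{p+e^{h/2}}\right). \] Then for all $x,y\in\mathbb{R}^n_{>0}$, $d_H(Ax,Ay)\le\Theta(d_H(x,y))$. Moreover, if $p>1$, then $\Theta$ is increasing and concave on $[0,\infty)$, $\Theta(0)=0$, $\Theta'(0)=\kappa(A):=\frac{p-1}{p+1}$, $\lim_{h\to\infty}\Theta(h)=\log R(A)$, and $\Theta(h)\le\kappa(A)h$ for all $h\ge0$; consequently $d_H(Ax,Ay)\le\kappa(A)\,d_H(x,y)$ for all $x,y\in\mathbb{R}^n_{>0}$.
   Context: For a matrix $A=(a_{ik})$ with strictly positive entries, its distortion is $R(A)=\max_{i,j,k,\ell}\frac{a_{ik}a_{j\ell}}{a_{i\ell}a_{jk}}$. For $x,y\in\mathbb{R}^n_{>0}$, $\mathrm{Dist}(x,y)=\max_{i,j}\frac{y_ix_j}{y_jx_i}$ and the Hilbert metric is $d_H(x,y)=\log\mathrm{Dist}(x,y)$. *)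

theory Defs
  imports "HOL-Analysis.Analysis"
begin

definition distortion :: "real ^ 'n ^ 'm \<Rightarrow> real" where
  "distortion A = Max {(A $ i $ k * A $ j $ l) / (A $ i $ l * A $ j $ k) | i j k l. True}"

definition Dist :: "real ^ 'n \<Rightarrow> real ^ 'n \<Rightarrow> real" where
  "Dist x y = Max {(y $ i * x $ j) / (y $ j * x $ i) | i j. True}"

definition hilbert_dist :: "real ^ 'n \<Rightarrow> real ^ 'n \<Rightarrow> real" where
  "hilbert_dist x y = ln (Dist x y)"

definition Theta :: "real \<Rightarrow> real \<Rightarrow> real" where
  "Theta p h = 2 * ln ((1 + p * exp (h / 2)) / (p + exp (h / 2)))"

definition kappa :: "real ^ 'n ^ 'm \<Rightarrow> real" where
  "kappa A = (sqrt (distortion A) - 1) / (sqrt (distortion A) + 1)"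

end

theory Submission
  imports Defs
begin

lemma key_half:
  fixes V C T X p q :: real
  assumes p: "p \<ge> 1" and q: "q \<ge> 1" and V: "V > 0" and C: "C \<ge> 0" and T: "T \<ge> 0"
    and X: "X \<le> (q^2-1)*C" and ord: "(q^2-1)*C \<le> (p^2-1)*T"
  shows "(p+q)^2 * (V*(V+C+T+X)) \<le> (1+p*q)^2 * ((V+T)*(V+C))"
proof (cases "p = 1")
  case True
  have q2: "q^2 - 1 \<ge> 0" using q by (simp add: one_le_power)
  have "X \<le> 0" using X ord True by simp
  then have "V*X \<le> T*C" using V C T
    by (smt (verit) mult_nonneg_nonneg mult_nonpos_nonneg mult.commute)
  then have "V*(V+C+T+X) \<le> (V+T)*(V+C)" by (simp add: algebra_simps)
  then show ?thesis using True by (simp add: mult_left_mono)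
next
  case False
  then have p1: "p > 1" using p by simp
  have P1: "p^2 - 1 > 0" using one_less_power[OF p1, of 2] by simp
  define u where "u = C / ((p^2-1)*V)"
  have Cu: "C = (p^2-1)*u*V" using P1 V unfolding u_def by (simp add: field_simps)
  define T0 where "T0 = (q^2-1)*u*V"
  have TT0: "T0 \<le> T" using ord P1 unfolding T0_def Cu
    by (smt (verit, best) mult.commute mult.left_commute mult_le_cancel_left_pos)
  define H where "H t = (1+p*q)^2 * ((V+t)*(V+C)) - (p+q)^2 * (V*(V+q^2*C+t))" for t
  have H0: "H T0 = V^2*(p^2-1)*(q^2-1)*((1+p*q)*u-1)^2"
    unfolding H_def T0_def Cu by (simp add: power2_eq_square algebra_simps)
  have "H T0 \<ge> 0" unfolding H0 using P1 q V
    by (intro mult_nonneg_nonneg) (auto simp: one_le_power)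
  have slope: "(1+p*q)^2*(V+C) - (p+q)^2*V \<ge> 0"
  proof -
    have "(1+p*q)^2 - (p+q)^2 = (p^2-1)*(q^2-1)" by (simp add: power2_eq_square algebra_simps)
    moreover have "(p^2-1)*(q^2-1) \<ge> 0" using P1 q by (simp add: one_le_power)
    ultimately have "(1+p*q)^2 \<ge> (p+q)^2" by linarith
    then have "(1+p*q)^2*V \<ge> (p+q)^2*V" using V by simp
    moreover have "(1+p*q)^2*C \<ge> 0" using C by simp
    ultimately show ?thesis by (simp add: algebra_simps)
  qed
  have "H T - H T0 = ((1+p*q)^2*(V+C) - (p+q)^2*V) * (T - T0)"
    unfolding H_def by (simp add: algebra_simps power2_eq_square)
  also have "\<dots> \<ge> 0" using slope TT0 by simp
  finally have "H T \<ge> 0" using \<open>H T0 \<ge> 0\<close> by linarith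
  moreover have "(p+q)^2 * (V*(V+C+T+X)) \<le> (p+q)^2 * (V*(V+q^2*C+T))"
    using X V by (intro mult_left_mono) (auto simp: algebra_simps)
  ultimately show ?thesis unfolding H_def by linarith
qed

lemma key_ineq:
  fixes V C T X p q :: real
  assumes p: "p \<ge> 1" and q: "q \<ge> 1" and V: "V > 0" and C: "C \<ge> 0" and T: "T \<ge> 0"
    and X1: "X \<le> (q^2-1)*C" and X2: "X \<le> (p^2-1)*T"
  shows "(p+q)^2 * (V*(V+C+T+X)) \<le> (1+p*q)^2 * ((V+T)*(V+C))"
proof (cases "(q^2-1)*C \<le> (p^2-1)*T")
  case True then show ?thesis using key_half[OF p q V C T X1] by blast
next
  case False
  have "(q+p)^2 * (V*(V+T+C+X)) \<le> (1+q*p)^2 * ((V+C)*(V+T))"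
    using key_half[OF q p V T C X2] False by linarith
  then show ?thesis by (simp add: algebra_simps)
qed

lemma sum_ineq:
  fixes v c t :: "'a \<Rightarrow> real" and p q a b :: real
  assumes fin: "finite I" and ne: "I \<noteq> {}" and vpos: "\<And>k. k \<in> I \<Longrightarrow> v k > 0"
    and p: "p \<ge> 1" and q: "q \<ge> 1" and a: "a > 0" and b: "b > 0"
    and c1: "\<And>k. k \<in> I \<Longrightarrow> a \<le> c k" and c2: "\<And>k. k \<in> I \<Longrightarrow> c k \<le> p^2 * a"
    and t1: "\<And>k. k \<in> I \<Longrightarrow> b \<le> t k" and t2: "\<And>k. k \<in> I \<Longrightarrow> t k \<le> q^2 * b"
  shows "(p+q)^2 * ((\<Sum>k\<in>I. v k * c k * t k) * (\<Sum>k\<in>I. v k))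
     \<le> (1+p*q)^2 * ((\<Sum>k\<in>I. v k * t k) * (\<Sum>k\<in>I. v k * c k))"
proof -
  define V where "V = (\<Sum>k\<in>I. v k)"
  define C where "C = (\<Sum>k\<in>I. v k * (c k / a - 1))"
  define T where "T = (\<Sum>k\<in>I. v k * (t k / b - 1))"
  define X where "X = (\<Sum>k\<in>I. v k * (c k / a - 1) * (t k / b - 1))"
  have e1: "(\<Sum>k\<in>I. v k * c k * t k) = a*b*(V+C+T+X)"
  proof -
    have "(\<Sum>k\<in>I. v k * c k * t k) = (\<Sum>k\<in>I. a*b*(v k + v k * (c k / a - 1) + v k * (t k / b - 1) + v k * (c k / a - 1) * (t k / b - 1)))"
      using a b by (intro sum.cong) (auto simp: field_simps)
    then show ?thesis unfolding V_def C_def T_def X_def by (simp add: sum.distrib flip: sum_distrib_left)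
  qed
  have e2: "(\<Sum>k\<in>I. v k * t k) = b*(V+T)"
  proof -
    have "(\<Sum>k\<in>I. v k * t k) = (\<Sum>k\<in>I. b*(v k + v k * (t k / b - 1)))"
      using a b by (intro sum.cong) (auto simp: field_simps)
    then show ?thesis unfolding V_def T_def by (simp add: sum.distrib flip: sum_distrib_left)
  qed
  have e3: "(\<Sum>k\<in>I. v k * c k) = a*(V+C)"
  proof -
    have "(\<Sum>k\<in>I. v k * c k) = (\<Sum>k\<in>I. a*(v k + v k * (c k / a - 1)))"
      using a b by (intro sum.cong) (auto simp: field_simps)
    then show ?thesis unfolding V_def C_def by (simp add: sum.distrib flip: sum_distrib_left)
  qed
  have V: "V > 0" unfolding V_def using fin ne vpos by (intro sum_pos) auto
  have C: "C \<ge> 0" unfolding C_def using vpos c1 a by (intro sum_nonneg mult_nonneg_nonneg) (auto simp: less_imp_le)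
  have T: "T \<ge> 0" unfolding T_def using vpos t1 b by (intro sum_nonneg mult_nonneg_nonneg) (auto simp: less_imp_le)
  have X1: "X \<le> (q^2-1)*C" unfolding X_def C_def sum_distrib_left
  proof (rule sum_mono)
    fix k assume k: "k \<in> I"
    have "t k / b - 1 \<le> q^2 - 1" using t2[OF k] b by (simp add: field_simps)
    moreover have "v k * (c k / a - 1) \<ge> 0" using vpos[OF k] c1[OF k] a by simp
    ultimately show "v k * (c k / a - 1) * (t k / b - 1) \<le> (q^2-1) * (v k * (c k / a - 1))"
      by (metis mult_right_mono mult.assoc mult.commute)
  qed
  have X2: "X \<le> (p^2-1)*T" unfolding X_def T_def sum_distrib_left
  proof (rule sum_mono)
    fix k assume k: "k \<in> I"
    have "c k / a - 1 \<le> p^2 - 1" using c2[OF k] a by (simp add: field_simps)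
    moreover have "v k * (t k / b - 1) \<ge> 0" using vpos[OF k] t1[OF k] b by simp
    ultimately show "v k * (c k / a - 1) * (t k / b - 1) \<le> (p^2-1) * (v k * (t k / b - 1))"
      by (metis mult_left_mono mult.commute mult.left_commute)
  qed
  have K: "(p+q)^2 * (V*(V+C+T+X)) \<le> (1+p*q)^2 * ((V+T)*(V+C))"
    by (rule key_ineq[OF p q V C T X1 X2])
  have "(p+q)^2 * ((\<Sum>k\<in>I. v k * c k * t k) * (\<Sum>k\<in>I. v k)) = (a*b) * ((p+q)^2 * (V*(V+C+T+X)))"
    unfolding e1 V_def by (simp add: algebra_simps)
  also have "\<dots> \<le> (a*b) * ((1+p*q)^2 * ((V+T)*(V+C)))" using K a b by (simp add: mult_left_mono)
  also have "\<dots> = (1+p*q)^2 * ((\<Sum>k\<in>I. v k * t k) * (\<Sum>k\<in>I. v k * c k))"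
    unfolding e2 e3 by (simp add: algebra_simps)
  finally show ?thesis .
qed

definition Th' :: "real \<Rightarrow> real \<Rightarrow> real" where
  "Th' p h = (p^2-1) * exp (h/2) / ((p + exp (h/2)) * (1 + p * exp (h/2)))"

lemma aux: fixes p E :: real assumes "p > 0" "E > 0"
  shows "2 * ((p * (E * (1/2)) * (p + E) - (1 + p * E) * (E * (1/2))) / (p + E)^2
        / ((1 + p * E) / (p + E))) = (p^2-1) * E / ((p + E) * (1 + p * E))"
proof -
  have a: "p + E > 0" "1 + p*E > 0" using assms by (auto intro: add_pos_pos)
  define N where "N = (p^2-1) * E"
  have n: "p * (E * (1/2)) * (p + E) - (1 + p * E) * (E * (1/2)) = N/2"
    unfolding N_def by (simp add: field_simps power2_eq_square)
  have "2 * ((N/2) / (p + E)^2 / ((1 + p * E) / (p + E))) = N / ((p + E)^2) * ((p + E) / (1 + p * E))"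
    by simp
  also have "\<dots> = N / ((p + E) * (1 + p * E))"
    using a by (simp add: power2_eq_square)
  finally show ?thesis unfolding n N_def .
qed

lemma Theta_deriv:
  assumes "p > 0"
  shows "(Theta p has_real_derivative Th' p h) (at h)"
proof -
  have e: "exp (h/2) > 0" by simp
  have pe: "p + exp (h/2) > 0" "1 + p * exp (h/2) > 0" using assms e by (auto intro: add_pos_pos)
  have ne: "p + exp (h/2) \<noteq> 0" using pe by simp
  have "((\<lambda>h. 2 * ln ((1 + p * exp (h / 2)) / (p + exp (h / 2)))) has_real_derivative
     2 * ((p * (exp (h/2) * (1/2)) * (p + exp (h/2)) - (1 + p * exp (h/2)) * (exp (h/2) * (1/2))) / (p + exp (h/2))^2
        / ((1 + p * exp (h / 2)) / (p + exp (h / 2))))) (at h)"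
    using assms e pe ne
    by (auto intro!: derivative_eq_intros simp: power2_eq_square add_pos_pos mult.commute)
  moreover have "2 * ((p * (exp (h/2) * (1/2)) * (p + exp (h/2)) - (1 + p * exp (h/2)) * (exp (h/2) * (1/2))) / (p + exp (h/2))^2
        / ((1 + p * exp (h / 2)) / (p + exp (h / 2)))) = Th' p h"
    unfolding Th'_def by (rule aux[OF assms e])
  ultimately show ?thesis unfolding Theta_def[abs_def] by simp
qed

lemma frac_cross:
  fixes a b c d :: real
  assumes "b > 0" "d > 0" "a * d \<le> c * b"
  shows "a / b \<le> c / d"
  using assms by (simp add: divide_simps)

lemma Th'_anti:
  assumes p: "p \<ge> 1" and x: "0 \<le> x" and xy: "x \<le> y"
  shows "Th' p y \<le> Th' p x"
proof -
  define e1 where "e1 = exp (x/2)"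
  define e2 where "e2 = exp (y/2)"
  have e1: "e1 \<ge> 1" unfolding e1_def using x by simp
  have e12: "e1 \<le> e2" unfolding e1_def e2_def using xy by simp
  have P: "p^2 - 1 \<ge> 0" using p by (simp add: one_le_power)
  have cross: "e2 * ((p + e1) * (1 + p * e1)) \<le> e1 * ((p + e2) * (1 + p * e2))"
  proof -
    have "e1 * ((p + e2) * (1 + p * e2)) - e2 * ((p + e1) * (1 + p * e1)) = p*(e2-e1)*(e1*e2-1)"
      by (simp add: algebra_simps)
    moreover have "e1*e2 \<ge> 1" using e1 e12 using mult_mono[of 1 e1 1 e2] by simp
    moreover have "p*(e2-e1)*(e1*e2-1) \<ge> 0" using p e12 \<open>e1*e2 \<ge> 1\<close> by (intro mult_nonneg_nonneg) auto
    ultimately show ?thesis by linarith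
  qed
  have X: "(p + e1) * (1 + p * e1) > 0" "(p + e2) * (1 + p * e2) > 0" using p e1 e12 by (auto intro!: mult_pos_pos add_pos_pos)
  have "e2 / ((p + e2) * (1 + p * e2)) \<le> e1 / ((p + e1) * (1 + p * e1))"
    by (rule frac_cross[OF X(2) X(1) cross])
  then have "(p^2-1) * (e2 / ((p + e2) * (1 + p * e2))) \<le> (p^2-1) * (e1 / ((p + e1) * (1 + p * e1)))"
    using P by (rule mult_left_mono)
  then show ?thesis unfolding Th'_def e1_def e2_def by simp
qed

lemma Theta_strict_mono:
  assumes p: "p > 1"
  shows "strict_mono_on {0..} (Theta p)"
proof (rule strict_mono_onI)
  fix x y :: real assume "x < y"
  define e1 where "e1 = exp (x/2)"
  define e2 where "e2 = exp (y/2)"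
  have e1: "e1 > 0" "e2 > 0" unfolding e1_def e2_def by auto
  have e12: "e1 < e2" unfolding e1_def e2_def using \<open>x<y\<close> by simp
  have "(1+p*e2)*(p+e1) - (1+p*e1)*(p+e2) = (p^2-1)*(e2-e1)" by (simp add: algebra_simps power2_eq_square)
  moreover have "(p^2-1)*(e2-e1) > 0" using p e12 one_less_power[OF p, of 2] by simp
  ultimately have "(1+p*e1)*(p+e2) < (1+p*e2)*(p+e1)" by linarith
  then have "(1+p*e1)/(p+e1) < (1+p*e2)/(p+e2)" using e1 p by (simp add: divide_simps add_pos_pos)
  moreover have "(1+p*e1)/(p+e1) > 0" using e1 p by (simp add: add_pos_pos)
  ultimately show "Theta p x < Theta p y" unfolding Theta_def e1_def e2_def by simp
qed

lemma Theta_concave: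
  assumes p: "p \<ge> 1"
  shows "concave_on {0..} (Theta p)"
  unfolding concave_on_def
proof (rule convex_on_realI[where f' = "\<lambda>h. - Th' p h"])
  show "connected {0::real..}" by simp
  fix x assume "x \<in> {0::real..}"
  show "((\<lambda>x. - Theta p x) has_real_derivative - Th' p x) (at x)"
    using Theta_deriv[of p x] p by (auto intro!: derivative_eq_intros)
next
  fix x y :: real assume "x \<in> {0..}" "y \<in> {0..}" "x \<le> y"
  then show "- Th' p x \<le> - Th' p y" using Th'_anti[OF p] by auto
qed

lemma Theta_lim:
  assumes p: "p > 1"
  shows "(Theta p \<longlongrightarrow> 2 * ln p) at_top"
  unfolding Theta_def[abs_def] using p by real_asymp

lemma Theta_le:
  assumes p: "p \<ge> 1" and h: "h \<ge> 0"
  shows "Theta p h \<le> (p-1)/(p+1) * h"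
proof -
  have k: "Th' p 0 = (p-1)/(p+1)"
  proof -
    have "Th' p 0 = ((p-1)*(p+1)) / ((p+1)*(p+1))" unfolding Th'_def
      by (simp add: power2_eq_square algebra_simps)
    also have "\<dots> = (p-1)/(p+1)" using p by simp
    finally show ?thesis .
  qed
  have "Theta p h - (p-1)/(p+1) * h \<le> Theta p 0 - (p-1)/(p+1) * 0"
  proof (rule deriv_nonpos_imp_antimono[where g' = "\<lambda>x. Th' p x - (p-1)/(p+1)" and g = "\<lambda>x. Theta p x - (p-1)/(p+1) * x"])
    fix x assume "x \<in> {0..h}"
    show "((\<lambda>x. Theta p x - (p-1)/(p+1) * x) has_real_derivative Th' p x - (p-1)/(p+1)) (at x)"
      using Theta_deriv[of p x] p by (auto intro!: derivative_eq_intros)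
    show "Th' p x - (p-1)/(p+1) \<le> 0" using Th'_anti[OF p, of 0 x] \<open>x \<in> {0..h}\<close> k by simp
  qed (use h in simp)
  moreover have "Theta p 0 = 0" unfolding Theta_def using p by (simp add: add.commute)
  ultimately show ?thesis by simp
qed

lemma fin_img4: "finite {f i j k l | (i::'a::finite) (j::'a) (k::'b::finite) (l::'b). True}"
proof -
  have "{f i j k l | (i::'a) j (k::'b) l. True} \<subseteq> (\<lambda>(i,j,k,l). f i j k l) ` UNIV"
  proof
    fix z assume "z \<in> {f i j k l | (i::'a) j (k::'b) l. True}"
    then obtain i j k l where "z = f i j k l" by blast
    then show "z \<in> (\<lambda>(i,j,k,l). f i j k l) ` UNIV" by (auto intro!: image_eqI[where x="(i,j,k,l)"])
  qed
  then show ?thesis by (rule finite_subset) simp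
qed

lemma fin_img2: "finite {f i j | (i::'a::finite) (j::'a). True}"
proof -
  have "{f i j | (i::'a) j. True} = (\<lambda>(i,j). f i j) ` UNIV" by auto
  then show ?thesis by simp
qed

lemma distortion_ge:
  fixes A :: "real ^ 'n ^ 'm"
  shows "(A $ i $ k * A $ j $ l) / (A $ i $ l * A $ j $ k) \<le> distortion A"
  unfolding distortion_def by (rule Max_ge[OF fin_img4]) blast

lemma Dist_ge:
  fixes x y :: "real ^ 'n"
  shows "(y $ i * x $ j) / (y $ j * x $ i) \<le> Dist x y"
  unfolding Dist_def by (rule Max_ge[OF fin_img2]) blast

lemma Dist_le:
  fixes x y :: "real ^ 'n"
  assumes "\<And>i j. (y $ i * x $ j) / (y $ j * x $ i) \<le> K"
  shows "Dist x y \<le> K"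
  unfolding Dist_def using assms by (subst Max_le_iff[OF fin_img2]) auto

lemma Dist_ge1:
  fixes x y :: "real ^ 'n"
  assumes "\<forall>i. x $ i > 0" "\<forall>i. y $ i > 0"
  shows "Dist x y \<ge> 1"
proof -
  fix i :: 'n
  have "(y $ i * x $ i) / (y $ i * x $ i) = 1" using assms(1)[rule_format, of i] assms(2)[rule_format, of i] by simp
  then show ?thesis using Dist_ge[of y i x i] by simp
qed

lemma distortion_ge1:
  fixes A :: "real ^ 'n ^ 'm"
  assumes "\<And>i k. A $ i $ k > 0"
  shows "distortion A \<ge> 1"
proof -
  fix i :: 'm and k :: 'n
  have "(A $ i $ k * A $ i $ k) / (A $ i $ k * A $ i $ k) = 1" using assms[of i k] by simp
  then show ?thesis using distortion_ge[of A i k i k] by simp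
qed

lemma min_exists:
  fixes f :: "'n::finite \<Rightarrow> real"
  obtains k0 where "\<And>k. f k0 \<le> f k"
proof -
  have "Min (range f) \<in> range f" by (rule Min_in) auto
  then obtain k0 where "f k0 = Min (range f)" by (metis imageE)
  moreover have "\<And>k. Min (range f) \<le> f k" by (rule Min_le) auto
  ultimately have "\<And>k. f k0 \<le> f k" by simp
  then show ?thesis by (rule that)
qed

lemma main_ineq:
  fixes A :: "real ^ 'n ^ 'n" and x y :: "real ^ 'n"
  assumes pos: "\<And>i k. A $ i $ k > 0" and x: "\<forall>i. x $ i > 0" and y: "\<forall>i. y $ i > 0"
  defines "p \<equiv> sqrt (distortion A)" and "s \<equiv> sqrt (Dist x y)"
  shows "Dist (A *v x) (A *v y) \<le> ((1 + p * s) / (p + s))^2"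
proof (rule Dist_le)
  fix i j :: 'n
  have R1: "distortion A \<ge> 1" by (rule distortion_ge1[OF pos])
  have D1: "Dist x y \<ge> 1" by (rule Dist_ge1[OF x y])
  have p1: "p \<ge> 1" unfolding p_def using R1 by simp
  have s1: "s \<ge> 1" unfolding s_def using D1 by simp
  have pp: "p^2 = distortion A" unfolding p_def using R1 by simp
  have ss: "s^2 = Dist x y" unfolding s_def using D1 by simp
  define v where "v k = A $ j $ k * x $ k" for k
  define c where "c k = A $ i $ k / A $ j $ k" for k
  define t where "t k = y $ k / x $ k" for k
  obtain k0 where k0: "\<And>k. c k0 \<le> c k" using min_exists by blast
  obtain k1 where k1: "\<And>k. t k1 \<le> t k" using min_exists by blast
  have cpos: "c k > 0" for k unfolding c_def using pos by simp
  have tpos: "t k > 0" for k unfolding t_def using x y by simp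
  have c2: "c k \<le> p^2 * c k0" for k
  proof -
    have "c k / c k0 = (A $ i $ k * A $ j $ k0) / (A $ i $ k0 * A $ j $ k)"
      unfolding c_def using pos[of j k] pos[of j k0] by (simp add: field_simps)
    also have "\<dots> \<le> p^2" unfolding pp by (rule distortion_ge)
    finally show ?thesis using cpos[of k0] by (simp add: divide_le_eq)
  qed
  have t2: "t k \<le> s^2 * t k1" for k
  proof -
    have "t k / t k1 = (y $ k * x $ k1) / (y $ k1 * x $ k)"
      unfolding t_def using x y by (simp add: field_simps)
    also have "\<dots> \<le> s^2" unfolding ss by (rule Dist_ge)
    finally show ?thesis using tpos[of k1] by (simp add: divide_le_eq)
  qed
  have S: "(p+s)^2 * ((\<Sum>k\<in>UNIV. v k * c k * t k) * (\<Sum>k\<in>UNIV. v k))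
     \<le> (1+p * s)^2 * ((\<Sum>k\<in>UNIV. v k * t k) * (\<Sum>k\<in>UNIV. v k * c k))"
    by (rule sum_ineq[where I=UNIV and a="c k0" and b="t k1"])
       (use pos x p1 s1 cpos tpos k0 c2 k1 t2 in \<open>auto simp: v_def\<close>)
  have e1: "v k * c k * t k = A $ i $ k * y $ k" for k
    unfolding v_def c_def t_def using pos[of j k] x[rule_format, of k] by simp
  have e2: "v k * t k = A $ j $ k * y $ k" for k
    unfolding v_def t_def using x[rule_format, of k] by simp
  have e3: "v k * c k = A $ i $ k * x $ k" for k
    unfolding v_def c_def using pos[of j k] by simp
  have Ai: "(A *v y) $ i = (\<Sum>k\<in>UNIV. v k * c k * t k)" "(A *v x) $ j = (\<Sum>k\<in>UNIV. v k)"
     "(A *v y) $ j = (\<Sum>k\<in>UNIV. v k * t k)" "(A *v x) $ i = (\<Sum>k\<in>UNIV. v k * c k)"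
    subgoal unfolding e1 by (simp add: matrix_vector_mult_def)
    subgoal unfolding v_def by (simp add: matrix_vector_mult_def)
    subgoal unfolding e2 by (simp add: matrix_vector_mult_def)
    subgoal unfolding e3 by (simp add: matrix_vector_mult_def)
    done
  have Axpos: "(A *v x) $ i > 0" "(A *v y) $ j > 0"
    unfolding matrix_vector_mult_def using pos x y by (auto intro!: sum_pos)
  have ps: "p + s > 0" using p1 s1 by simp
  show "((A *v y) $ i * (A *v x) $ j) / ((A *v y) $ j * (A *v x) $ i) \<le> ((1 + p * s) / (p + s))^2"
    using S Axpos ps unfolding Ai[symmetric]
    by (simp add: divide_simps power_divide mult.commute mult.left_commute)
qed

lemma Th'_0:
  assumes p: "p \<ge> 1"
  shows "Th' p 0 = (p-1)/(p+1)"
proof -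
  have "Th' p 0 = ((p-1)*(p+1)) / ((p+1)*(p+1))" unfolding Th'_def
    by (simp add: power2_eq_square algebra_simps)
  also have "\<dots> = (p-1)/(p+1)" using p by simp
  finally show ?thesis .
qed

lemma mv_pos:
  fixes A :: "real ^ 'n ^ 'm" and x :: "real ^ 'n"
  assumes pos: "\<And>i k. A $ i $ k > 0" and x: "\<forall>i. x $ i > 0"
  shows "\<forall>i. (A *v x) $ i > 0"
  unfolding matrix_vector_mult_def using pos x by (auto intro!: sum_pos)

lemma part1:
  fixes A :: "real ^ 'n ^ 'n" and x y :: "real ^ 'n"
  assumes pos: "\<And>i k. A $ i $ k > 0" and x: "\<forall>i. x $ i > 0" and y: "\<forall>i. y $ i > 0"
  shows "hilbert_dist (A *v x) (A *v y) \<le> Theta (sqrt (distortion A)) (hilbert_dist x y)"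
proof -
  define p where "p = sqrt (distortion A)"
  define s where "s = sqrt (Dist x y)"
  have R1: "distortion A \<ge> 1" by (rule distortion_ge1[OF pos])
  have D1: "Dist x y \<ge> 1" by (rule Dist_ge1[OF x y])
  have p1: "p \<ge> 1" unfolding p_def using R1 by simp
  have s1: "s \<ge> 1" unfolding s_def using D1 by simp
  have M: "Dist (A *v x) (A *v y) \<le> ((1 + p * s) / (p + s))^2"
    using main_ineq[OF pos x y] unfolding p_def s_def .
  have DA: "Dist (A *v x) (A *v y) \<ge> 1" by (rule Dist_ge1[OF mv_pos[OF pos x] mv_pos[OF pos y]])
  have q: "(1 + p * s) / (p + s) > 0" using p1 s1 by (simp add: add_pos_pos)
  have es: "exp (ln (Dist x y) / 2) = s"
  proof -
    have "ln (Dist x y) / 2 = ln s" unfolding s_def using D1 by (simp add: ln_sqrt)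
    then show ?thesis using s1 by simp
  qed
  have "hilbert_dist (A *v x) (A *v y) = ln (Dist (A *v x) (A *v y))" by (simp add: hilbert_dist_def)
  also have "\<dots> \<le> ln (((1 + p * s) / (p + s))^2)" using M DA by (subst ln_le_cancel_iff) auto
  also have "\<dots> = 2 * ln ((1 + p * s) / (p + s))" using q by (simp add: ln_realpow)
  also have "\<dots> = Theta p (hilbert_dist x y)" unfolding Theta_def hilbert_dist_def es ..
  finally show ?thesis unfolding p_def .
qed

theorem mainTheorem12:
  fixes A :: "real ^ 'n ^ 'n"
  assumes n2: "CARD('n) \<ge> 2"
    and pos: "\<And>i k. A $ i $ k > 0"
  defines "p \<equiv> sqrt (distortion A)"
  shows "(\<forall>x y :: real ^ 'n. (\<forall>i. x $ i > 0) \<and> (\<forall>i. y $ i > 0) \<longrightarrow>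
            hilbert_dist (A *v x) (A *v y) \<le> Theta p (hilbert_dist x y))
    \<and> (p > 1 \<longrightarrow>
          strict_mono_on {0..} (Theta p)
        \<and> concave_on {0..} (Theta p)
        \<and> Theta p 0 = 0
        \<and> (Theta p has_real_derivative kappa A) (at 0 within {0..})
        \<and> (Theta p \<longlongrightarrow> ln (distortion A)) at_top
        \<and> (\<forall>h\<ge>0. Theta p h \<le> kappa A * h)
        \<and> (\<forall>x y :: real ^ 'n. (\<forall>i. x $ i > 0) \<and> (\<forall>i. y $ i > 0) \<longrightarrow>
            hilbert_dist (A *v x) (A *v y) \<le> kappa A * hilbert_dist x y))"
proof -
  have R1: "distortion A \<ge> 1" by (rule distortion_ge1[OF pos])
  have p1: "p \<ge> 1" unfolding p_def using R1 by simp
  have pp: "p^2 = distortion A" unfolding p_def using R1 by simp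
  have kap: "kappa A = (p-1)/(p+1)" unfolding kappa_def p_def ..
  have P1: "\<forall>x y :: real ^ 'n. (\<forall>i. x $ i > 0) \<and> (\<forall>i. y $ i > 0) \<longrightarrow>
            hilbert_dist (A *v x) (A *v y) \<le> Theta p (hilbert_dist x y)"
    unfolding p_def using part1[OF pos] by blast
  have P2: "strict_mono_on {0..} (Theta p)
        \<and> concave_on {0..} (Theta p)
        \<and> Theta p 0 = 0
        \<and> (Theta p has_real_derivative kappa A) (at 0 within {0..})
        \<and> (Theta p \<longlongrightarrow> ln (distortion A)) at_top
        \<and> (\<forall>h\<ge>0. Theta p h \<le> kappa A * h)
        \<and> (\<forall>x y :: real ^ 'n. (\<forall>i. x $ i > 0) \<and> (\<forall>i. y $ i > 0) \<longrightarrow>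
            hilbert_dist (A *v x) (A *v y) \<le> kappa A * hilbert_dist x y)" if gt: "p > 1"
  proof (intro conjI allI impI)
    show "strict_mono_on {0..} (Theta p)" by (rule Theta_strict_mono[OF gt])
    show "concave_on {0..} (Theta p)" by (rule Theta_concave[OF p1])
    show "Theta p 0 = 0" unfolding Theta_def by (simp add: add.commute)
    show "(Theta p has_real_derivative kappa A) (at 0 within {0..})"
      using has_field_derivative_at_within[OF Theta_deriv[of p 0]] gt Th'_0[OF p1] kap by simp
    have "ln (distortion A) = 2 * ln p" unfolding pp[symmetric] using gt by (simp add: ln_realpow)
    then show "(Theta p \<longlongrightarrow> ln (distortion A)) at_top" using Theta_lim[OF gt] by simp
    fix h :: real assume "h \<ge> 0"
    then show "Theta p h \<le> kappa A * h" using Theta_le[OF p1] kap by simp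
  next
    fix x y :: "real ^ 'n" assume xy: "(\<forall>i. x $ i > 0) \<and> (\<forall>i. y $ i > 0)"
    have "hilbert_dist x y \<ge> 0" unfolding hilbert_dist_def using Dist_ge1[of x y] xy by simp
    then have "Theta p (hilbert_dist x y) \<le> kappa A * hilbert_dist x y" using Theta_le[OF p1] kap by simp
    then show "hilbert_dist (A *v x) (A *v y) \<le> kappa A * hilbert_dist x y" using P1 xy by force
  qed
  show ?thesis using P1 P2 by blast
qed

end
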